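(* As subgroups of $SU(3)$, $$D(9,1,1;2,1,1)\subsetneq D(9,1,1;2,0,1)=D(9,1,1;2,0,0)=D(18,1,1;2,1,1)=D(18,1,1;2,0,0)=D(18,1,1;2,0,1).$$ In particular all five groups on the right are isomorphic to $Fr(162\times 4)$.
   Context: For a positive integer $n$ and integers $a,b$, let $\eta=e^{2i\pi/n}$ and $F(n,a,b)=\mathrm{diag}(\eta^a,\eta^b,\eta^{-a-b})$. For a positive integer $d$ and integers $r,s$, let $\delta=e^{2i\pi/d}$ and $\tilde G(d,r,s)=\begin{pmatrix}\delta^r&0&0\\0&0&\delta^s\\0&-\delta^{-r-s}&0\end{pmatrix}$. Let $E=\begin{pmatrix}0&1&0\\0&0&1\\1&0&0\end{pmatrix}$ and $D(n,a,b;d,r,s)=\langle F(n,a,b),E,\tilde G(d,r,s)\rangle\subset SU(3)$. Let $\omega=e^{2i\pi/3}$, $J$ the antidiagonal matrix with antidiagonal entries $1$, $G_1=\mathrm{diag}(e^{7i\pi/9},-e^{4i\pi/9},-e^{7i\pi/9})$, $G_2=\begin{pmatrix}-\tfrac12 e^{4i\pi/9}&\tfrac{1}{\sqrt2}e^{7i\pi/9}&\tfrac12 e^{4i\pi/9}\\ \tfrac{1}{\sqrt2}e^{7i\pi/9}&0&\tfrac{1}{\sqrt2}e^{7i\pi/9}\\ \tfrac12 e^{4i\pi/9}&\tfrac{1}{\sqrt2}e^{7i\pi/9}&-\tfrac12 e^{4i\pi/9}\end{pmatrix}$, $FUM=-\omega J$, $Fr(162\times 4)=\langle G_1,G_2,FUM\rangle$.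 *)

theory Defs
  imports "HOL-Analysis.Analysis" "HOL-Algebra.Group"
begin

text \<open>3x3 complex matrices are modelled as complex^3^3 (HOL-Analysis),
  with matrix product (**), identity mat 1 and inverse matrix_inv.
  mat3 builds a matrix from its entries given row by row.\<close>

definition mat3 :: "complex \<Rightarrow> complex \<Rightarrow> complex \<Rightarrow> complex \<Rightarrow> complex \<Rightarrow> complex
    \<Rightarrow> complex \<Rightarrow> complex \<Rightarrow> complex \<Rightarrow> complex^3^3" where
  "mat3 a11 a12 a13 a21 a22 a23 a31 a32 a33 =
     (\<chi> i j. if i = 1 then (if j = 1 then a11 else if j = 2 then a12 else a13)
             else if i = 2 then (if j = 1 then a21 else if j = 2 then a22 else a23)
             else (if j = 1 then a31 else if j = 2 then a32 else a33))"

inductive_set gen_group :: "(complex^3^3) set \<Rightarrow> (complex^3^3) set" for S where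
  gen_one: "mat 1 \<in> gen_group S"
| gen_base: "A \<in> S \<Longrightarrow> A \<in> gen_group S"
| gen_mult: "A \<in> gen_group S \<Longrightarrow> B \<in> gen_group S \<Longrightarrow> A ** B \<in> gen_group S"
| gen_inv: "A \<in> gen_group S \<Longrightarrow> matrix_inv A \<in> gen_group S"

definition matgrp :: "(complex^3^3) set \<Rightarrow> (complex^3^3) monoid" where
  "matgrp H = \<lparr>carrier = H, mult = (**), one = mat 1\<rparr>"

definition root_of_unity :: "int \<Rightarrow> complex" where
  "root_of_unity n = exp (2 * pi * \<i> / of_int n)"

definition Fmat :: "int \<Rightarrow> int \<Rightarrow> int \<Rightarrow> complex^3^3" where
  "Fmat n a b = (let \<eta> = root_of_unity n in
     mat3 (\<eta> powi a) 0 0  0 (\<eta> powi b) 0  0 0 (\<eta> powi (- a - b)))"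

definition Gtilde :: "int \<Rightarrow> int \<Rightarrow> int \<Rightarrow> complex^3^3" where
  "Gtilde d r s = (let \<delta> = root_of_unity d in
     mat3 (\<delta> powi r) 0 0  0 0 (\<delta> powi s)  0 (- (\<delta> powi (- r - s))) 0)"

definition Emat :: "complex^3^3" where
  "Emat = mat3 0 1 0  0 0 1  1 0 0"

definition Dgrp :: "int \<Rightarrow> int \<Rightarrow> int \<Rightarrow> int \<Rightarrow> int \<Rightarrow> int \<Rightarrow> (complex^3^3) set" where
  "Dgrp n a b d r s = gen_group {Fmat n a b, Emat, Gtilde d r s}"

definition omega :: complex where
  "omega = exp (2 * pi * \<i> / 3)"

definition Jmat :: "complex^3^3" where
  "Jmat = mat3 0 0 1  0 1 0  1 0 0"

definition G1 :: "complex^3^3" where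
  "G1 = mat3 (exp (7 * pi * \<i> / 9)) 0 0
             0 (- exp (4 * pi * \<i> / 9)) 0
             0 0 (- exp (7 * pi * \<i> / 9))"

definition G2 :: "complex^3^3" where
  "G2 = (let u = exp (4 * pi * \<i> / 9); v = exp (7 * pi * \<i> / 9);
             h = complex_of_real (1/2); q = complex_of_real (1 / sqrt 2) in
     mat3 (- h * u) (q * v) (h * u)
          (q * v) 0 (q * v)
          (h * u) (q * v) (- h * u))"

definition FUM :: "complex^3^3" where
  "FUM = (\<chi> i j. - omega * Jmat $ i $ j)"

definition Fr162x4 :: "(complex^3^3) set" where
  "Fr162x4 = gen_group {G1, G2, FUM}"

end

theory Submission
  imports Defs
begin


definition zz :: complex where "zz = exp (pi * \<i> / 9)"
definition zp :: "nat \<Rightarrow> complex" where "zp k = zz ^ k"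

lemma zz18: "zz ^ 18 = 1"
proof -
  have "zz ^ 18 = exp (of_nat 18 * (pi * \<i> / 9))" unfolding zz_def by (rule exp_of_nat_mult[symmetric])
  also have "of_nat 18 * (pi * \<i> / 9) = 2 * of_real pi * \<i>" by simp
  also have "exp \<dots> = 1" by (rule exp_two_pi_i)
  finally show ?thesis .
qed

lemma zp_mult: "zp a * zp b = zp ((a + b) mod 18)"
proof -
  have "zp a * zp b = zz ^ (a+b)" by (simp add: zp_def power_add)
  also have "a + b = 18 * ((a+b) div 18) + (a+b) mod 18" by simp
  hence "zz ^ (a+b) = (zz^18) ^ ((a+b) div 18) * zz ^ ((a+b) mod 18)"
    by (metis power_add power_mult)
  finally show ?thesis by (simp add: zz18 zp_def)
qed

lemma zp9: "zp 9 = -1"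
proof -
  have "zp 9 = exp (of_nat 9 * (pi * \<i> / 9))" unfolding zp_def zz_def by (rule exp_of_nat_mult[symmetric])
  also have "of_nat 9 * (pi * \<i> / 9) = pi * \<i>" by simp
  finally show ?thesis by simp
qed

lemma zpk: "exp (of_nat k * pi * \<i> / 9) = zp k"
  unfolding zp_def zz_def by (subst exp_of_nat_mult[symmetric]) (simp add: algebra_simps)

lemma mat3_mult: "mat3 a11 a12 a13 a21 a22 a23 a31 a32 a33 ** mat3 b11 b12 b13 b21 b22 b23 b31 b32 b33
  = mat3 (a11*b11+a12*b21+a13*b31) (a11*b12+a12*b22+a13*b32) (a11*b13+a12*b23+a13*b33)
         (a21*b11+a22*b21+a23*b31) (a21*b12+a22*b22+a23*b32) (a21*b13+a22*b23+a23*b33)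
         (a31*b11+a32*b21+a33*b31) (a31*b12+a32*b22+a33*b32) (a31*b13+a32*b23+a33*b33)"
  unfolding mat3_def matrix_matrix_mult_def
  by (simp add: vec_eq_iff sum_3 forall_3)

lemma mat3_one: "mat 1 = mat3 1 0 0 0 1 0 0 0 1"
  unfolding mat3_def by (simp add: vec_eq_iff forall_3 mat_def)

lemma zp0: "zp 0 = 1" by (simp add: zp_def)
lemma zp1: "zp 1 = zz" by (simp add: zp_def)

lemma inv_zp: "zp a * zp b = 1 \<Longrightarrow> inverse (zp a) = zp b"
  by (simp add: inverse_unique)

lemma rou9: "root_of_unity 9 = zp 2"
  unfolding root_of_unity_def using zpk[of 2] by (simp add: field_simps)
lemma rou18: "root_of_unity 18 = zp 1"
  unfolding root_of_unity_def using zpk[of 1] by (simp add: field_simps)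
lemma rou2: "root_of_unity 2 = -1"
  unfolding root_of_unity_def by simp

lemma F9_eq: "Fmat 9 1 1 = mat3 (zp 2) 0 0 0 (zp 2) 0 0 0 (zp 14)"
proof -
  have "inverse (zp 4) = zp 14" by (rule inv_zp) (simp add: zp_mult zp0)
  moreover have "zp 2 ^ 2 = zp 4" by (simp add: power2_eq_square zp_mult)
  ultimately show ?thesis unfolding Fmat_def rou9 Let_def by (simp add: power_int_minus)
qed

lemma F18_eq: "Fmat 18 1 1 = mat3 (zp 1) 0 0 0 (zp 1) 0 0 0 (zp 16)"
proof -
  have "inverse (zp 2) = zp 16" by (rule inv_zp) (simp add: zp_mult zp0)
  moreover have "zp 1 ^ 2 = zp 2" by (simp add: zp_def)
  ultimately show ?thesis unfolding Fmat_def rou18 Let_def by (simp add: power_int_minus)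
qed

lemma E_eq: "Emat = mat3 0 (zp 0) 0 0 0 (zp 0) (zp 0) 0 0"
  unfolding Emat_def zp0 ..

lemma G211_eq: "Gtilde 2 1 1 = mat3 (zp 9) 0 0 0 0 (zp 9) 0 (zp 9) 0"
  unfolding Gtilde_def rou2 Let_def zp9 by (simp add: power_int_minus)
lemma G201_eq: "Gtilde 2 0 1 = mat3 (zp 0) 0 0 0 0 (zp 9) 0 (zp 0) 0"
  unfolding Gtilde_def rou2 Let_def zp9 zp0 by (simp add: power_int_minus)
lemma G200_eq: "Gtilde 2 0 0 = mat3 (zp 0) 0 0 0 0 (zp 0) 0 (zp 9) 0"
  unfolding Gtilde_def rou2 Let_def zp9 zp0 by (simp add: power_int_minus)

lemma zp_neg: "- zp k = zp ((k + 9) mod 18)"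
  by (metis mult_minus1 zp9 zp_mult add.commute)

lemma G1_eq: "G1 = mat3 (zp 7) 0 0 0 (zp 13) 0 0 0 (zp 16)"
proof -
  have a: "exp (7 * pi * \<i> / 9) = zp 7" using zpk[of 7] by simp
  have b: "exp (4 * pi * \<i> / 9) = zp 4" using zpk[of 4] by simp
  show ?thesis unfolding G1_def a b zp_neg by simp
qed

lemma omega_eq: "omega = zp 6"
  unfolding omega_def using zpk[of 6] by (simp add: field_simps)

lemma FUM_eq: "FUM = mat3 0 0 (zp 15) 0 (zp 15) 0 (zp 15) 0 0"
  unfolding FUM_def Jmat_def omega_eq mat3_def
  by (simp add: vec_eq_iff forall_3 zp_neg)



definition M1 :: "complex^3^3" where "M1 = mat3 0 0 (zp 7) 0 (zp 13) 0 (zp 7) 0 0"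
definition M2 :: "complex^3^3" where "M2 = mat3 (zp 13) 0 0 0 0 (zp 7) 0 (zp 7) 0"
definition M3 :: "complex^3^3" where "M3 = mat3 (zp 6) 0 0 0 (zp 15) 0 0 0 (zp 15)"

lemma gen_sub: "S \<subseteq> gen_group T \<Longrightarrow> gen_group S \<subseteq> gen_group T"
proof
  fix x assume S: "S \<subseteq> gen_group T" and x: "x \<in> gen_group S"
  from x show "x \<in> gen_group T"
    by (induction rule: gen_group.induct) (use S in \<open>auto intro: gen_group.intros\<close>)
qed

lemma word0: "Gtilde 2 1 1 \<in> gen_group {Fmat 9 1 1, Emat, Gtilde 2 0 1}"
proof -
  have e: "Gtilde 2 1 1 = (Emat) ** ((Gtilde 2 0 1) ** ((Emat) ** ((Gtilde 2 0 1) ** ((Gtilde 2 0 1)))))"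
    by (simp add: F9_eq F18_eq E_eq G211_eq G201_eq G200_eq M1_def M2_def M3_def mat3_mult zp_mult numeral_2_eq_2[symmetric])
  show ?thesis unfolding e by (intro gen_mult gen_base) simp_all
qed

lemma word1: "Gtilde 2 0 1 \<in> gen_group {Fmat 9 1 1, Emat, Gtilde 2 0 0}"
proof -
  have e: "Gtilde 2 0 1 = (Emat) ** ((Gtilde 2 0 0) ** ((Emat)))"
    by (simp add: F9_eq F18_eq E_eq G211_eq G201_eq G200_eq M1_def M2_def M3_def mat3_mult zp_mult numeral_2_eq_2[symmetric])
  show ?thesis unfolding e by (intro gen_mult gen_base) simp_all
qed

lemma word2: "Fmat 9 1 1 \<in> gen_group {Fmat 18 1 1, Emat, Gtilde 2 1 1}"
proof -
  have e: "Fmat 9 1 1 = (Fmat 18 1 1) ** ((Fmat 18 1 1))"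
    by (simp add: F9_eq F18_eq E_eq G211_eq G201_eq G200_eq M1_def M2_def M3_def mat3_mult zp_mult numeral_2_eq_2[symmetric])
  show ?thesis unfolding e by (intro gen_mult gen_base) simp_all
qed

lemma word3: "Gtilde 2 0 0 \<in> gen_group {Fmat 18 1 1, Emat, Gtilde 2 1 1}"
proof -
  have e: "Gtilde 2 0 0 = (Fmat 18 1 1) ** ((Fmat 18 1 1) ** ((Fmat 18 1 1) ** ((Fmat 18 1 1) ** ((Fmat 18 1 1) ** ((Fmat 18 1 1) ** ((Fmat 18 1 1) ** ((Fmat 18 1 1) ** ((Fmat 18 1 1) ** ((Gtilde 2 1 1))))))))))"
    by (simp add: F9_eq F18_eq E_eq G211_eq G201_eq G200_eq M1_def M2_def M3_def mat3_mult zp_mult numeral_2_eq_2[symmetric])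
  show ?thesis unfolding e by (intro gen_mult gen_base) simp_all
qed

lemma word4: "Gtilde 2 1 1 \<in> gen_group {Fmat 18 1 1, Emat, Gtilde 2 0 0}"
proof -
  have e: "Gtilde 2 1 1 = (Emat) ** ((Gtilde 2 0 0) ** ((Gtilde 2 0 0) ** ((Emat) ** ((Emat) ** ((Gtilde 2 0 0))))))"
    by (simp add: F9_eq F18_eq E_eq G211_eq G201_eq G200_eq M1_def M2_def M3_def mat3_mult zp_mult numeral_2_eq_2[symmetric])
  show ?thesis unfolding e by (intro gen_mult gen_base) simp_all
qed

lemma word5: "Gtilde 2 0 0 \<in> gen_group {Fmat 18 1 1, Emat, Gtilde 2 0 1}"
proof -
  have e: "Gtilde 2 0 0 = (Gtilde 2 0 1) ** ((Gtilde 2 0 1) ** ((Gtilde 2 0 1)))"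
    by (simp add: F9_eq F18_eq E_eq G211_eq G201_eq G200_eq M1_def M2_def M3_def mat3_mult zp_mult numeral_2_eq_2[symmetric])
  show ?thesis unfolding e by (intro gen_mult gen_base) simp_all
qed

lemma word6: "Fmat 18 1 1 \<in> gen_group {Fmat 9 1 1, Emat, Gtilde 2 0 1}"
proof -
  have e: "Fmat 18 1 1 = (Fmat 9 1 1) ** ((Fmat 9 1 1) ** ((Fmat 9 1 1) ** ((Fmat 9 1 1) ** ((Fmat 9 1 1) ** ((Gtilde 2 0 1) ** ((Emat) ** ((Gtilde 2 0 1) ** ((Emat)))))))))"
    by (simp add: F9_eq F18_eq E_eq G211_eq G201_eq G200_eq M1_def M2_def M3_def mat3_mult zp_mult numeral_2_eq_2[symmetric])
  show ?thesis unfolding e by (intro gen_mult gen_base) simp_all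
qed

lemma word7: "M1 \<in> gen_group {Fmat 9 1 1, Emat, Gtilde 2 0 1}"
proof -
  have e: "M1 = (Fmat 9 1 1) ** ((Gtilde 2 0 1) ** ((Gtilde 2 0 1) ** ((Emat) ** ((Gtilde 2 0 1) ** ((Fmat 9 1 1))))))"
    by (simp add: F9_eq F18_eq E_eq G211_eq G201_eq G200_eq M1_def M2_def M3_def mat3_mult zp_mult numeral_2_eq_2[symmetric])
  show ?thesis unfolding e by (intro gen_mult gen_base) simp_all
qed

lemma word8: "M2 \<in> gen_group {Fmat 9 1 1, Emat, Gtilde 2 0 1}"
proof -
  have e: "M2 = (Fmat 9 1 1) ** ((Emat) ** ((Fmat 9 1 1) ** ((Gtilde 2 0 1) ** ((Emat) ** ((Gtilde 2 0 1) ** ((Gtilde 2 0 1)))))))"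
    by (simp add: F9_eq F18_eq E_eq G211_eq G201_eq G200_eq M1_def M2_def M3_def mat3_mult zp_mult numeral_2_eq_2[symmetric])
  show ?thesis unfolding e by (intro gen_mult gen_base) simp_all
qed

lemma word9: "M3 \<in> gen_group {Fmat 9 1 1, Emat, Gtilde 2 0 1}"
proof -
  have e: "M3 = (Fmat 9 1 1) ** ((Fmat 9 1 1) ** ((Fmat 9 1 1) ** ((Gtilde 2 0 1) ** ((Gtilde 2 0 1)))))"
    by (simp add: F9_eq F18_eq E_eq G211_eq G201_eq G200_eq M1_def M2_def M3_def mat3_mult zp_mult numeral_2_eq_2[symmetric])
  show ?thesis unfolding e by (intro gen_mult gen_base) simp_all
qed

lemma word10: "Fmat 9 1 1 \<in> gen_group {M1, M2, M3}"
proof -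
  have e: "Fmat 9 1 1 = (M1) ** ((M1) ** ((M1) ** ((M1) ** ((M1) ** ((M2) ** ((M2) ** ((M1))))))))"
    by (simp add: F9_eq F18_eq E_eq G211_eq G201_eq G200_eq M1_def M2_def M3_def mat3_mult zp_mult numeral_2_eq_2[symmetric])
  show ?thesis unfolding e by (intro gen_mult gen_base) simp_all
qed

lemma word11: "Emat \<in> gen_group {M1, M2, M3}"
proof -
  have e: "Emat = (M1) ** ((M1) ** ((M1) ** ((M2) ** ((M2) ** ((M2) ** ((M3) ** ((M3))))))))"
    by (simp add: F9_eq F18_eq E_eq G211_eq G201_eq G200_eq M1_def M2_def M3_def mat3_mult zp_mult numeral_2_eq_2[symmetric])
  show ?thesis unfolding e by (intro gen_mult gen_base) simp_all
qed

lemma word12: "Gtilde 2 0 1 \<in> gen_group {M1, M2, M3}"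
proof -
  have e: "Gtilde 2 0 1 = (M1) ** ((M1) ** ((M2) ** ((M1) ** ((M3) ** ((M1) ** ((M2) ** ((M2) ** ((M2) ** ((M2))))))))))"
    by (simp add: F9_eq F18_eq E_eq G211_eq G201_eq G200_eq M1_def M2_def M3_def mat3_mult zp_mult numeral_2_eq_2[symmetric])
  show ?thesis unfolding e by (intro gen_mult gen_base) simp_all
qed



definition monmat :: "(3 \<Rightarrow> 3) \<Rightarrow> (3 \<Rightarrow> complex) \<Rightarrow> complex^3^3" where
  "monmat \<sigma> f = (\<chi> i j. if j = \<sigma> i then f i else 0)"

lemma monmat_mult: "monmat \<sigma> f ** monmat \<tau> g = monmat (\<tau> \<circ> \<sigma>) (\<lambda>i. f i * g (\<sigma> i))"
proof -
  have "(\<Sum>k\<in>UNIV. (if k = \<sigma> i then f i else 0) * (if j = \<tau> k then g k else 0))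
        = (if j = \<tau> (\<sigma> i) then f i * g (\<sigma> i) else 0)" for i j
  proof -
    have "(\<Sum>k\<in>UNIV. (if k = \<sigma> i then f i else 0) * (if j = \<tau> k then g k else 0))
       = (\<Sum>k\<in>UNIV. if k = \<sigma> i then f i * (if j = \<tau> k then g k else 0) else 0)"
      by (rule sum.cong) auto
    also have "\<dots> = f i * (if j = \<tau> (\<sigma> i) then g (\<sigma> i) else 0)"
      by (simp add: sum.delta')
    finally show ?thesis by simp
  qed
  then show ?thesis
    unfolding monmat_def matrix_matrix_mult_def by (simp add: vec_eq_iff)
qed

lemma monmat_id: "monmat id (\<lambda>i. 1) = mat 1"
  unfolding monmat_def mat_def by (simp add: vec_eq_iff eq_commute)

lemma minv_unique:
  fixes A B :: "complex^3^3"
  assumes "A ** B = mat 1" "B ** A = mat 1"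
  shows "matrix_inv A = B"
proof -
  have ex: "\<exists>A'. A ** A' = mat 1 \<and> A' ** A = mat 1" using assms by blast
  define C where "C = matrix_inv A"
  have C: "A ** C = mat 1 \<and> C ** A = mat 1"
    unfolding C_def matrix_inv_def by (rule someI_ex[OF ex])
  have "C = C ** (A ** B)" by (simp add: assms)
  also have "\<dots> = (C ** A) ** B" by (simp add: matrix_mul_assoc)
  also have "\<dots> = B" using C by simp
  finally show ?thesis unfolding C_def .
qed

lemma monmat_inv:
  assumes "bij \<sigma>" "\<forall>i. f i \<noteq> 0"
  shows "monmat \<sigma> f ** monmat (inv_into UNIV \<sigma>) (\<lambda>i. inverse (f (inv_into UNIV \<sigma> i))) = mat 1"
        "monmat (inv_into UNIV \<sigma>) (\<lambda>i. inverse (f (inv_into UNIV \<sigma> i))) ** monmat \<sigma> f = mat 1"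
proof -
  have a: "inv_into UNIV \<sigma> \<circ> \<sigma> = id" "\<sigma> \<circ> inv_into UNIV \<sigma> = id" "\<And>i. inv_into UNIV \<sigma> (\<sigma> i) = i" "\<And>i. \<sigma> (inv_into UNIV \<sigma> i) = i"
    using assms(1) by (auto simp: bij_def inv_f_f surj_f_inv_f)
  show "monmat \<sigma> f ** monmat (inv_into UNIV \<sigma>) (\<lambda>i. inverse (f (inv_into UNIV \<sigma> i))) = mat 1"
    unfolding monmat_mult a using assms(2) by (simp add: monmat_id[symmetric])
  show "monmat (inv_into UNIV \<sigma>) (\<lambda>i. inverse (f (inv_into UNIV \<sigma> i))) ** monmat \<sigma> f = mat 1"
    unfolding monmat_mult a using assms(2) by (simp add: monmat_id[symmetric])
qed

definition Q :: "(complex^3^3) set" where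
  "Q = {A. \<exists>\<sigma> f c. A = monmat \<sigma> f \<and> bij \<sigma> \<and> c^2 = 1 \<and> (\<forall>i. f i ^ 9 = c)}"

lemma Q_one: "mat 1 \<in> Q"
  unfolding Q_def by (rule CollectI, rule exI[of _ id], rule exI[of _ "\<lambda>i. 1"], rule exI[of _ 1])
     (simp add: monmat_id)

lemma Q_mult: "A \<in> Q \<Longrightarrow> B \<in> Q \<Longrightarrow> A ** B \<in> Q"
proof -
  assume "A \<in> Q" "B \<in> Q"
  then obtain \<sigma> f c \<tau> g d where A: "A = monmat \<sigma> f" "bij \<sigma>" "c^2 = 1" "\<forall>i. f i ^ 9 = c"
    and B: "B = monmat \<tau> g" "bij \<tau>" "d^2 = 1" "\<forall>i. g i ^ 9 = d"
    unfolding Q_def by blast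
  have "A ** B = monmat (\<tau> \<circ> \<sigma>) (\<lambda>i. f i * g (\<sigma> i))" using A B monmat_mult by simp
  moreover have "bij (\<tau> \<circ> \<sigma>)" using A B by (simp add: bij_comp)
  moreover have "(c*d)^2 = 1" using A B by (simp add: power_mult_distrib)
  moreover have "\<forall>i. (f i * g (\<sigma> i))^9 = c * d" using A B by (simp add: power_mult_distrib)
  ultimately show "A ** B \<in> Q" unfolding Q_def by blast
qed

lemma Q_inv: "A \<in> Q \<Longrightarrow> matrix_inv A \<in> Q \<and> A ** matrix_inv A = mat 1 \<and> matrix_inv A ** A = mat 1"
proof -
  assume "A \<in> Q"
  then obtain \<sigma> f c where A: "A = monmat \<sigma> f" "bij \<sigma>" "c^2 = 1" "\<forall>i. f i ^ 9 = c"
    unfolding Q_def by blast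
  have nz: "\<forall>i. f i \<noteq> 0"
  proof
    fix i show "f i \<noteq> 0"
    proof
      assume "f i = 0" then have "c = 0" using A(4) by (metis zero_power zero_less_numeral)
      then show False using A(3) by simp
    qed
  qed
  define B where "B = monmat (inv_into UNIV \<sigma>) (\<lambda>i. inverse (f (inv_into UNIV \<sigma> i)))"
  have AB: "A ** B = mat 1" "B ** A = mat 1" using monmat_inv[OF A(2) nz] A(1) B_def by auto
  have mi: "matrix_inv A = B" by (rule minv_unique[OF AB])
  have "bij (inv_into UNIV \<sigma>)" using A(2) by (simp add: bij_imp_bij_inv)
  moreover have "(inverse c)^2 = 1" using A(3) by (metis inverse_1 power_inverse)
  moreover have "\<forall>i. (inverse (f (inv_into UNIV \<sigma> i)))^9 = inverse c" using A(4) by (simp add: power_inverse)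
  ultimately have "B \<in> Q" unfolding Q_def B_def by blast
  then show ?thesis using mi AB by simp
qed

lemma gen_Q: "S \<subseteq> Q \<Longrightarrow> gen_group S \<subseteq> Q"
proof
  fix x assume S: "S \<subseteq> Q" and x: "x \<in> gen_group S"
  from x show "x \<in> Q"
    by (induction rule: gen_group.induct) (use S Q_one Q_mult Q_inv in auto)
qed

lemma monmat_eqI:
  assumes "\<And>i j. j \<noteq> \<sigma> i \<Longrightarrow> A $ i $ j = 0"
  shows "A = monmat \<sigma> (\<lambda>i. A $ i $ \<sigma> i)"
  unfolding monmat_def using assms by (auto simp: vec_eq_iff)

lemma bij3: "(\<forall>i::3. \<tau> (\<sigma> i) = i) \<Longrightarrow> (\<forall>i. \<sigma> (\<tau> i) = i) \<Longrightarrow> bij \<sigma>"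
  by (rule o_bij[of \<tau>]) (auto simp: fun_eq_iff)



lemma zp_pow: "zp k ^ n = zp ((k * n) mod 18)"
proof (induction n)
  case 0 then show ?case by (simp add: zp0)
next
  case (Suc n)
  have "zp k ^ Suc n = zp k * zp ((k * n) mod 18)" using Suc by simp
  also have "\<dots> = zp ((k + (k * n) mod 18) mod 18)" by (rule zp_mult)
  also have "(k + (k * n) mod 18) mod 18 = (k * Suc n) mod 18" by (simp add: mod_add_right_eq)
  finally show ?case .
qed

lemma QI: "A = monmat \<sigma> f \<Longrightarrow> bij \<sigma> \<Longrightarrow> c^2 = 1 \<Longrightarrow> \<forall>i. f i ^ 9 = c \<Longrightarrow> A \<in> Q"
  unfolding Q_def by blast

definition sE :: "3 \<Rightarrow> 3" where "sE i = (if i = 1 then 2 else if i = 2 then 3 else 1)"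
definition sEi :: "3 \<Rightarrow> 3" where "sEi i = (if i = 1 then 3 else if i = 2 then 1 else 2)"
definition sG :: "3 \<Rightarrow> 3" where "sG i = (if i = 1 then 1 else if i = 2 then 3 else 2)"

lemma bij_sE: "bij sE" by (rule bij3[of sEi]) (simp_all add: forall_3 sE_def sEi_def)
lemma bij_sG: "bij sG" by (rule bij3[of sG]) (simp_all add: forall_3 sG_def)
lemma bij_id3: "bij (id :: 3 \<Rightarrow> 3)" by simp

lemma F9_Q: "Fmat 9 1 1 \<in> Q"
proof (rule QI[of _ id _ 1])
  show "Fmat 9 1 1 = monmat id (\<lambda>i. Fmat 9 1 1 $ i $ id i)"
  proof (rule monmat_eqI)
    fix i j :: 3 assume "j \<noteq> id i"
    then show "Fmat 9 1 1 $ i $ j = 0" using exhaust_3[of i] exhaust_3[of j] by (auto simp: F9_eq mat3_def)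
  qed
qed (simp_all add: forall_3 F9_eq mat3_def zp_pow zp0)

lemma E_Q: "Emat \<in> Q"
proof (rule QI[of _ sE _ 1])
  show "Emat = monmat sE (\<lambda>i. Emat $ i $ sE i)"
    by (rule monmat_eqI) (use exhaust_3 in \<open>fastforce simp: Emat_def mat3_def sE_def\<close>)
qed (simp_all add: forall_3 Emat_def mat3_def sE_def bij_sE)

lemma G211_Q: "Gtilde 2 1 1 \<in> Q"
proof (rule QI[of _ sG _ "zp 9"])
  show "Gtilde 2 1 1 = monmat sG (\<lambda>i. Gtilde 2 1 1 $ i $ sG i)"
    by (rule monmat_eqI) (use exhaust_3 in \<open>fastforce simp: G211_eq mat3_def sG_def\<close>)
qed (simp_all add: forall_3 G211_eq mat3_def sG_def bij_sG zp_pow zp0)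

lemma G201_notQ: "Gtilde 2 0 1 \<notin> Q"
proof
  assume "Gtilde 2 0 1 \<in> Q"
  then obtain \<sigma> f c where A: "Gtilde 2 0 1 = monmat \<sigma> f" "c^2 = 1" "\<forall>i. f i ^ 9 = c"
    unfolding Q_def by blast
  have ent: "Gtilde 2 0 1 $ i $ \<sigma> i = f i" for i unfolding A(1) monmat_def by simp
  have nz: "f i \<noteq> 0" for i
  proof
    assume "f i = 0" then have "c = 0" using A(3) by (metis zero_power zero_less_numeral)
    then show False using A(2) by simp
  qed
  have "f 1 = 1"
    using ent[of 1] nz[of 1] exhaust_3[of "\<sigma> 1"] by (auto simp: G201_eq mat3_def zp0)
  moreover have "f 2 = -1"
    using ent[of 2] nz[of 2] exhaust_3[of "\<sigma> 2"] by (auto simp: G201_eq mat3_def zp0 zp9)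
  moreover have "f 1 ^ 9 = c" "f 2 ^ 9 = c" using A(3) by blast+
  ultimately have "c = 1" "c = -1" by simp_all
  then show False by simp
qed



definition hs :: complex where "hs = complex_of_real (1 / sqrt 2)"
lemma hs2: "hs * hs = 1/2"
  unfolding hs_def by (simp flip: of_real_mult)
lemma hs2': "hs * (hs * x) = x / 2" by (simp add: mult.assoc[symmetric] hs2)

definition Hm :: "complex^3^3" where "Hm = mat3 hs 0 hs 0 1 0 (-hs) 0 hs"
definition Ht :: "complex^3^3" where "Ht = mat3 hs 0 (-hs) 0 1 0 hs 0 hs"

lemma mat3_cong: "a1=b1 \<Longrightarrow> a2=b2 \<Longrightarrow> a3=b3 \<Longrightarrow> a4=b4 \<Longrightarrow> a5=b5 \<Longrightarrow> a6=b6 \<Longrightarrow> a7=b7 \<Longrightarrow> a8=b8 \<Longrightarrow> a9=b9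
  \<Longrightarrow> mat3 a1 a2 a3 a4 a5 a6 a7 a8 a9 = mat3 b1 b2 b3 b4 b5 b6 b7 b8 b9" by simp

lemma zp13: "zp 13 = - zp 4" using zp_neg[of 4] by simp
lemma zp16: "zp 16 = - zp 7" using zp_neg[of 7] by simp
lemma zp15: "zp 15 = - zp 6" using zp_neg[of 6] by simp

lemma HHt: "Hm ** Ht = mat 1" "Ht ** Hm = mat 1"
  unfolding Hm_def Ht_def mat3_mult mat3_one by (simp_all add: hs2)

lemma G1_conj: "G1 = Hm ** (M1 ** Ht)"
  unfolding G1_eq Hm_def Ht_def M1_def mat3_mult zp13 zp16
  by (rule mat3_cong) (simp_all add: algebra_simps hs2 hs2')

lemma FUM_conj: "FUM = Hm ** (M3 ** Ht)"
  unfolding FUM_eq Hm_def Ht_def M3_def mat3_mult zp15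
  by (rule mat3_cong) (simp_all add: algebra_simps hs2 hs2')

lemma G2_conj: "G2 = Hm ** (M2 ** Ht)"
proof -
  have u: "exp (4 * pi * \<i> / 9) = zp 4" using zpk[of 4] by simp
  have v: "exp (7 * pi * \<i> / 9) = zp 7" using zpk[of 7] by simp
  show ?thesis
  unfolding G2_def u v Let_def hs_def[symmetric] Hm_def Ht_def M2_def mat3_mult zp13
  by (rule mat3_cong) (simp_all add: algebra_simps hs2 hs2')
qed



definition Qw :: "(complex^3^3) set" where
  "Qw = {A. \<exists>\<sigma> f. A = monmat \<sigma> f \<and> bij \<sigma> \<and> (\<forall>i. f i \<noteq> 0)}"

lemma Qw_one: "mat 1 \<in> Qw"
  unfolding Qw_def by (rule CollectI, rule exI[of _ id], rule exI[of _ "\<lambda>i. 1"]) (simp add: monmat_id)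

lemma Qw_mult: "A \<in> Qw \<Longrightarrow> B \<in> Qw \<Longrightarrow> A ** B \<in> Qw"
proof -
  assume "A \<in> Qw" "B \<in> Qw"
  then obtain \<sigma> f \<tau> g where A: "A = monmat \<sigma> f" "bij \<sigma>" "\<forall>i. f i \<noteq> 0"
    and B: "B = monmat \<tau> g" "bij \<tau>" "\<forall>i. g i \<noteq> 0"
    unfolding Qw_def by blast
  have "A ** B = monmat (\<tau> \<circ> \<sigma>) (\<lambda>i. f i * g (\<sigma> i))" using A B monmat_mult by simp
  moreover have "bij (\<tau> \<circ> \<sigma>)" using A B by (simp add: bij_comp)
  moreover have "\<forall>i. f i * g (\<sigma> i) \<noteq> 0" using A B by simp
  ultimately show "A ** B \<in> Qw" unfolding Qw_def by blast
qed

lemma Qw_inv: "A \<in> Qw \<Longrightarrow> matrix_inv A \<in> Qw \<and> A ** matrix_inv A = mat 1 \<and> matrix_inv A ** A = mat 1"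
proof -
  assume "A \<in> Qw"
  then obtain \<sigma> f where A: "A = monmat \<sigma> f" "bij \<sigma>" and nz: "\<forall>i. f i \<noteq> 0"
    unfolding Qw_def by blast
  define B where "B = monmat (inv_into UNIV \<sigma>) (\<lambda>i. inverse (f (inv_into UNIV \<sigma> i)))"
  have AB: "A ** B = mat 1" "B ** A = mat 1" using monmat_inv[OF A(2) nz] A(1) B_def by auto
  have mi: "matrix_inv A = B" by (rule minv_unique[OF AB])
  have "bij (inv_into UNIV \<sigma>)" using A(2) by (simp add: bij_imp_bij_inv)
  moreover have "\<forall>i. inverse (f (inv_into UNIV \<sigma> i)) \<noteq> 0" using nz by simp
  ultimately have "B \<in> Qw" unfolding Qw_def B_def by blast
  then show ?thesis using mi AB by simp
qed

lemma gen_Qw: "S \<subseteq> Qw \<Longrightarrow> gen_group S \<subseteq> Qw"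
proof
  fix x assume S: "S \<subseteq> Qw" and x: "x \<in> gen_group S"
  from x show "x \<in> Qw"
    by (induction rule: gen_group.induct) (use S Qw_one Qw_mult Qw_inv in auto)
qed

lemma Q_Qw: "Q \<subseteq> Qw"
proof
  fix A assume "A \<in> Q"
  then obtain \<sigma> f c where A: "A = monmat \<sigma> f" "bij \<sigma>" "c^2 = 1" "\<forall>i. f i ^ 9 = c"
    unfolding Q_def by blast
  have "\<forall>i. f i \<noteq> 0"
  proof
    fix i show "f i \<noteq> 0"
    proof
      assume "f i = 0" then have "c = 0" using A(4) by (metis zero_power zero_less_numeral)
      then show False using A(3) by simp
    qed
  qed
  then show "A \<in> Qw" unfolding Qw_def using A by blast
qed

lemma G201_Qw: "Gtilde 2 0 1 \<in> Qw"
proof -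
  have "Gtilde 2 0 1 = monmat sG (\<lambda>i. Gtilde 2 0 1 $ i $ sG i)"
  proof (rule monmat_eqI)
    fix i j :: 3 assume "j \<noteq> sG i"
    then show "Gtilde 2 0 1 $ i $ j = 0" using exhaust_3[of i] exhaust_3[of j] by (auto simp: G201_eq mat3_def sG_def)
  qed
  moreover have "\<forall>i. Gtilde 2 0 1 $ i $ sG i \<noteq> 0"
    by (simp add: forall_3 G201_eq mat3_def sG_def zp0 zp9)
  ultimately show ?thesis unfolding Qw_def using bij_sG by blast
qed

definition psi :: "complex^3^3 \<Rightarrow> complex^3^3" where "psi X = Hm ** (X ** Ht)"

lemma HtH_cancel: "(Z ** Ht) ** (Hm ** W) = Z ** W"
proof -
  have "(Z ** Ht) ** (Hm ** W) = Z ** ((Ht ** Hm) ** W)" by (simp only: matrix_mul_assoc)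
  also have "\<dots> = Z ** W" by (simp only: HHt matrix_mul_lid)
  finally show ?thesis .
qed

lemma psi_mult: "psi (X ** Y) = psi X ** psi Y"
proof -
  have "psi X ** psi Y = ((Hm ** X) ** Ht) ** (Hm ** (Y ** Ht))" unfolding psi_def by (simp only: matrix_mul_assoc)
  also have "\<dots> = (Hm ** X) ** (Y ** Ht)" by (rule HtH_cancel)
  also have "\<dots> = psi (X ** Y)" unfolding psi_def by (simp only: matrix_mul_assoc)
  finally show ?thesis by (rule sym)
qed

lemma psi_one: "psi (mat 1) = mat 1"
  unfolding psi_def by (simp only: matrix_mul_lid HHt)

lemma psi_inj: "psi X = psi Y \<Longrightarrow> X = Y"
proof -
  have k: "Ht ** psi X ** Hm = X" for X
  proof -
    have "Ht ** psi X ** Hm = ((Ht ** Hm) ** X) ** (Ht ** Hm)" unfolding psi_def by (simp only: matrix_mul_assoc)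
    then show ?thesis by (simp only: HHt matrix_mul_lid matrix_mul_rid)
  qed
  assume e: "psi X = psi Y"
  have "X = Ht ** psi X ** Hm" by (rule k[symmetric])
  also have "\<dots> = Ht ** psi Y ** Hm" by (simp only: e)
  also have "\<dots> = Y" by (rule k)
  finally show "X = Y" .
qed

lemma psi_minv: "A \<in> Qw \<Longrightarrow> matrix_inv (psi A) = psi (matrix_inv A)"
proof -
  assume "A \<in> Qw"
  then have i: "A ** matrix_inv A = mat 1" "matrix_inv A ** A = mat 1" using Qw_inv by blast+
  have "psi A ** psi (matrix_inv A) = mat 1" by (simp only: psi_mult[symmetric] i psi_one)
  moreover have "psi (matrix_inv A) ** psi A = mat 1" by (simp only: psi_mult[symmetric] i psi_one)
  ultimately show ?thesis by (rule minv_unique)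
qed

lemma gen_psi:
  assumes S: "S \<subseteq> Qw"
  shows "gen_group (psi ` S) = psi ` gen_group S"
proof
  have GQ: "gen_group S \<subseteq> Qw" using gen_Qw[OF S] .
  show "psi ` gen_group S \<subseteq> gen_group (psi ` S)"
  proof
    fix y assume "y \<in> psi ` gen_group S"
    then obtain x where x: "x \<in> gen_group S" and y: "y = psi x" by blast
    have "psi x \<in> gen_group (psi ` S)" using x
    proof (induction rule: gen_group.induct)
      case gen_one then show ?case by (simp only: psi_one gen_group.gen_one)
    next
      case (gen_base A) then show ?case by (intro gen_group.gen_base imageI)
    next
      case (gen_mult A B) then show ?case by (simp only: psi_mult gen_group.gen_mult)
    next
      case (gen_inv A)
      then have "A \<in> Qw" using GQ by blast
      then show ?case using gen_inv by (simp only: psi_minv[symmetric] gen_group.gen_inv)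
    qed
    then show "y \<in> gen_group (psi ` S)" using y by (simp only:)
  qed
  show "gen_group (psi ` S) \<subseteq> psi ` gen_group S"
  proof
    fix y assume "y \<in> gen_group (psi ` S)"
    then show "y \<in> psi ` gen_group S"
    proof (induction rule: gen_group.induct)
      case gen_one show ?case by (rule image_eqI[of _ _ "mat 1"]) (simp_all only: psi_one gen_group.gen_one)
    next
      case (gen_base A) then show ?case by (auto intro: gen_group.gen_base)
    next
      case (gen_mult A B)
      then obtain a b where "a \<in> gen_group S" "b \<in> gen_group S" "A = psi a" "B = psi b" by blast
      then have "A ** B = psi (a ** b)" "a ** b \<in> gen_group S" by (simp_all only: psi_mult gen_group.gen_mult)
      then show ?case by blast
    next
      case (gen_inv A)
      then obtain a where a: "a \<in> gen_group S" "A = psi a" by blast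
      then have "a \<in> Qw" using GQ by blast
      then have "matrix_inv A = psi (matrix_inv a)" "matrix_inv a \<in> gen_group S" using a by (simp_all only: psi_minv gen_group.gen_inv)
      then show ?case by blast
    qed
  qed
qed



lemma D901_Qw: "gen_group {Fmat 9 1 1, Emat, Gtilde 2 0 1} \<subseteq> Qw"
  by (rule gen_Qw) (use F9_Q E_Q G201_Qw Q_Qw in blast)

lemma D901_M: "gen_group {Fmat 9 1 1, Emat, Gtilde 2 0 1} = gen_group {M1, M2, M3}"
proof
  show "gen_group {Fmat 9 1 1, Emat, Gtilde 2 0 1} \<subseteq> gen_group {M1, M2, M3}"
    by (rule gen_sub) (use word10 word11 word12 in blast)
  show "gen_group {M1, M2, M3} \<subseteq> gen_group {Fmat 9 1 1, Emat, Gtilde 2 0 1}"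
    by (rule gen_sub) (use word7 word8 word9 in blast)
qed

lemma M_Qw: "{M1, M2, M3} \<subseteq> Qw"
  using word7 word8 word9 D901_Qw by blast

lemma Fr_img: "Fr162x4 = psi ` gen_group {Fmat 9 1 1, Emat, Gtilde 2 0 1}"
proof -
  have "{G1, G2, FUM} = psi ` {M1, M2, M3}"
    by (simp only: image_insert image_empty psi_def G1_conj[symmetric] G2_conj[symmetric] FUM_conj[symmetric])
  then have "Fr162x4 = gen_group (psi ` {M1, M2, M3})" unfolding Fr162x4_def by (simp only:)
  also have "\<dots> = psi ` gen_group {M1, M2, M3}" by (rule gen_psi[OF M_Qw])
  finally show ?thesis by (simp only: D901_M)
qed

lemma mg_carrier: "carrier (matgrp H) = H" by (simp add: matgrp_def)
lemma mg_mult: "x \<otimes>\<^bsub>matgrp H\<^esub> y = x ** y" by (simp add: matgrp_def)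

lemma iso_main: "matgrp (gen_group {Fmat 9 1 1, Emat, Gtilde 2 0 1}) \<cong> matgrp Fr162x4"
proof (rule is_isoI, rule isoI)
  let ?D = "gen_group {Fmat 9 1 1, Emat, Gtilde 2 0 1}"
  show "psi \<in> hom (matgrp ?D) (matgrp Fr162x4)"
  proof (rule homI)
    fix x assume "x \<in> carrier (matgrp ?D)"
    then have "x \<in> ?D" by (simp only: mg_carrier)
    then have "psi x \<in> psi ` ?D" by (rule imageI)
    then show "psi x \<in> carrier (matgrp Fr162x4)" by (simp only: mg_carrier Fr_img)
  next
    fix x y show "psi (x \<otimes>\<^bsub>matgrp ?D\<^esub> y) = psi x \<otimes>\<^bsub>matgrp Fr162x4\<^esub> psi y"
      by (simp only: mg_mult psi_mult)
  qed
  have "inj_on psi ?D" using psi_inj by (rule inj_onI)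
  then have "bij_betw psi ?D Fr162x4" unfolding bij_betw_def using Fr_img by blast
  then show "bij_betw psi (carrier (matgrp ?D)) (carrier (matgrp Fr162x4))" by (simp only: mg_carrier)
qed

lemma sub3: "a \<in> G \<Longrightarrow> b \<in> G \<Longrightarrow> c \<in> G \<Longrightarrow> {a,b,c} \<subseteq> G" by simp
lemma gb1: "a \<in> gen_group {a,b,c}" by (rule gen_group.gen_base) simp
lemma gb2: "b \<in> gen_group {a,b,c}" by (rule gen_group.gen_base) simp
lemma gb3: "c \<in> gen_group {a,b,c}" by (rule gen_group.gen_base) simp

theorem theorem10:
  shows "Dgrp 9 1 1 2 1 1 \<subset> Dgrp 9 1 1 2 0 1
       \<and> Dgrp 9 1 1 2 0 1 = Dgrp 9 1 1 2 0 0
       \<and> Dgrp 9 1 1 2 0 0 = Dgrp 18 1 1 2 1 1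
       \<and> Dgrp 18 1 1 2 1 1 = Dgrp 18 1 1 2 0 0
       \<and> Dgrp 18 1 1 2 0 0 = Dgrp 18 1 1 2 0 1
       \<and> matgrp (Dgrp 9 1 1 2 0 1) \<cong> matgrp Fr162x4
       \<and> matgrp (Dgrp 9 1 1 2 0 0) \<cong> matgrp Fr162x4
       \<and> matgrp (Dgrp 18 1 1 2 1 1) \<cong> matgrp Fr162x4
       \<and> matgrp (Dgrp 18 1 1 2 0 0) \<cong> matgrp Fr162x4
       \<and> matgrp (Dgrp 18 1 1 2 0 1) \<cong> matgrp Fr162x4"
proof -
  have i1: "Dgrp 9 1 1 2 0 1 \<subseteq> Dgrp 9 1 1 2 0 0" unfolding Dgrp_def
    by (intro gen_sub sub3 word1 gb1 gb2)
  have i2: "Dgrp 9 1 1 2 0 0 \<subseteq> Dgrp 18 1 1 2 1 1" unfolding Dgrp_def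
    by (intro gen_sub sub3 word2 word3 gb2)
  have i3: "Dgrp 18 1 1 2 1 1 \<subseteq> Dgrp 18 1 1 2 0 0" unfolding Dgrp_def
    by (intro gen_sub sub3 word4 gb1 gb2)
  have i4: "Dgrp 18 1 1 2 0 0 \<subseteq> Dgrp 18 1 1 2 0 1" unfolding Dgrp_def
    by (intro gen_sub sub3 word5 gb1 gb2)
  have i5: "Dgrp 18 1 1 2 0 1 \<subseteq> Dgrp 9 1 1 2 0 1" unfolding Dgrp_def
    by (intro gen_sub sub3 word6 gb2 gb3)
  have i0: "Dgrp 9 1 1 2 1 1 \<subseteq> Dgrp 9 1 1 2 0 1" unfolding Dgrp_def
    by (intro gen_sub sub3 word0 gb1 gb2)
  have "Dgrp 9 1 1 2 1 1 \<subseteq> Q" unfolding Dgrp_def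
    by (intro gen_Q sub3 F9_Q E_Q G211_Q)
  moreover have "Gtilde 2 0 1 \<in> Dgrp 9 1 1 2 0 1" unfolding Dgrp_def by (rule gb3)
  ultimately have ne: "Dgrp 9 1 1 2 1 1 \<noteq> Dgrp 9 1 1 2 0 1" using G201_notQ by blast
  have e1: "Dgrp 9 1 1 2 0 1 = Dgrp 9 1 1 2 0 0"
    by (rule subset_antisym[OF i1]) (rule order_trans[OF i2 order_trans[OF i3 order_trans[OF i4 i5]]])
  have e2: "Dgrp 9 1 1 2 0 0 = Dgrp 18 1 1 2 1 1"
    by (rule subset_antisym[OF i2]) (rule order_trans[OF i3 order_trans[OF i4 order_trans[OF i5 i1]]])
  have e3: "Dgrp 18 1 1 2 1 1 = Dgrp 18 1 1 2 0 0"
    by (rule subset_antisym[OF i3]) (rule order_trans[OF i4 order_trans[OF i5 order_trans[OF i1 i2]]])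
  have e4: "Dgrp 18 1 1 2 0 0 = Dgrp 18 1 1 2 0 1"
    by (rule subset_antisym[OF i4]) (rule order_trans[OF i5 order_trans[OF i1 order_trans[OF i2 i3]]])
  have iso: "matgrp (Dgrp 9 1 1 2 0 1) \<cong> matgrp Fr162x4" unfolding Dgrp_def by (rule iso_main)
  have ps: "Dgrp 9 1 1 2 1 1 \<subset> Dgrp 9 1 1 2 0 1" using i0 ne by (rule psubsetI)
  have iso2: "matgrp (Dgrp 9 1 1 2 0 0) \<cong> matgrp Fr162x4" using iso by (simp only: e1)
  have iso3: "matgrp (Dgrp 18 1 1 2 1 1) \<cong> matgrp Fr162x4" using iso2 by (simp only: e2)
  have iso4: "matgrp (Dgrp 18 1 1 2 0 0) \<cong> matgrp Fr162x4" using iso3 by (simp only: e3)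
  have iso5: "matgrp (Dgrp 18 1 1 2 0 1) \<cong> matgrp Fr162x4" using iso4 by (simp only: e4)
  show ?thesis using ps e1 e2 e3 e4 iso iso2 iso3 iso4 iso5 by (intro conjI)
qed

end
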